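(* In the FIND setting of the context, let $\mathcal C_r$ and $\mathcal C_s$ be leaf clusters of $\mathcal T$, choose consistent orderings of $\mathcal T_r^+$ and $\mathcal T_s^+$, and let $\boldsymbol\Sigma_{r,g+}$, $\boldsymbol\Sigma_{s,g+}$ denote the matrices produced by the elimination process for target $r$ and target $s$. Then for every cluster $\mathcal C_i$ that is a node of both $\mathcal T_r^+$ and $\mathcal T_s^+$, $$\boldsymbol\Sigma_{r,i+}(\mathcal B_i,\mathcal B_i)=\boldsymbol\Sigma_{s,i+}(\mathcal B_i,\mathcal B_i).$$
   Context: Setting (FIND). $\mathcal M$ is a finite set of mesh nodes; $\mathbf A$ is an invertible complex matrix indexed by $\mathcal M\times\mathcal M$, structurally symmetric ($A_{ij}\neq0\iff A_{ji}\neq0$); distinct nodes $i,j$ are connected if $A_{ij}\neq 0$. $\boldsymbol\Sigma$ is a complex matrix indexed by $\mathcal M\times\mathcal M$ with $\Sigma_{ij}=0$ whenever $i\neq j$ and $i,j$ are not connected. Matrices are indexed by $\mathcal M$ itself (the ordering only determines the sequence of eliminations). $\dagger$ is conjugate transpose, $\mathbf X^{-\dagger}=(\mathbf X^{-1})^\dagger$. $\mathbf X(X,Y)$ is the submatrix with rows in $X$, columns in $Y$. For a cluster $\mathcal C\subseteq\mathcal M$: boundary set $\mathcal B_{\mathcal C}=\{i\in\mathcal C: A_{ij}\neq 0\text{ for some } j\notin\mathcal C\}$, inner set $\mathcal I_{\mathcal C}=\mathcal C\setminus\mathcal B_{\mathcal C}$; for $\mathcal C_g$ write $\mathcal B_g,\mathcal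 I_g$. Cluster tree: $\mathcal T$ is a rooted binary tree of clusters with root $\mathcal M$, each non-leaf cluster the disjoint union of its two children. For a leaf $\mathcal C_r$ with path $r=a_0,\dots,a_d$ (root) and $b_k$ the sibling of $a_k$, the augmented tree $\mathcal T_r^+$ has root $\mathcal C_{-r}=\mathcal M\setminus\mathcal C_r$; for $0\le k\le d-2$, $\mathcal C_{-a_k}=\mathcal M\setminus\mathcal C_{a_k}$ has children $\mathcal C_{b_k}$ and $\mathcal C_{-a_{k+1}}$, with $\mathcal C_{-a_{d-1}}$ identified with $\mathcal C_{b_{d-1}}$; each basic cluster $\mathcal C_{b_k}$ carries its subtree from $\mathcal T$. (A cluster common to two augmented trees has the same subtree in both.) Private inner nodes: $\mathcal S_g=\mathcal I_g$ for a leaf $g$ of an augmented tree; $\mathcal S_g=\mathcal I_g\setminus(\mathcal I_i\cup\mathcal I_j)$ if $g$ has children $i,j$. Consistent ordering: a total order $g_1,\dots,g_m$ of the nodes of $\mathcal T_r^+$ with every node after all its descendants. Elimination for target $r$: $\mathbf A_{r,g_1}=\mathbf A$, $\boldsymbol\Sigma_{r,g_1}=\boldsymbol\Sigma$; for each $g$ (with $\mathbf A_{r,g}(\mathcal S_g,\mathcal S_g)$ invertible), $\mathcal L_g=\mathbf A_{r,g}(\mathcal B_g,\mathcal S_g)\mathbf A_{r,g}(\mathcal S_g,\mathcal S_g)^{-1}$, $\mathbf L_g$ is the identity on $\mathcal M$ except $\mathbf L_g(\mathcal B_g,\mathcal S_g)=\mathcal L_g$, $\mathbf A_{r,g+}=\mathbf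 L_g^{-1}\mathbf A_{r,g}$, $\boldsymbol\Sigma_{r,g+}=\mathbf L_g^{-1}\boldsymbol\Sigma_{r,g}\mathbf L_g^{-\dagger}$, and $\mathbf A_{r,g_{t+1}}=\mathbf A_{r,g_t+}$, $\boldsymbol\Sigma_{r,g_{t+1}}=\boldsymbol\Sigma_{r,g_t+}$. Thus $\boldsymbol\Sigma_{r,i+}$ is the matrix just after eliminating $\mathcal S_i$. *)

theory Defs
  imports Complex_Main
begin

text \<open>A matrix indexed by (a subset of) the mesh nodes is a function
  'a => 'a => complex; only the entries on the relevant index set matter.\<close>

type_synonym 'a cmat = "'a \<Rightarrow> 'a \<Rightarrow> complex"

definition mmul :: "'a set \<Rightarrow> 'a cmat \<Rightarrow> 'a cmat \<Rightarrow> 'a cmat" where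
  "mmul I X Y = (\<lambda>i j. \<Sum>k\<in>I. X i k * Y k j)"

definition ctr :: "'a cmat \<Rightarrow> 'a cmat" where
  "ctr X = (\<lambda>i j. cnj (X j i))"

definition inverse_on :: "'a set \<Rightarrow> 'a cmat \<Rightarrow> 'a cmat \<Rightarrow> bool" where
  "inverse_on I X Y \<longleftrightarrow>
     (\<forall>i\<in>I. \<forall>j\<in>I. (\<Sum>k\<in>I. X i k * Y k j) = (if i = j then 1 else 0)) \<and>
     (\<forall>i\<in>I. \<forall>j\<in>I. (\<Sum>k\<in>I. Y i k * X k j) = (if i = j then 1 else 0))"

definition invertible_on :: "'a set \<Rightarrow> 'a cmat \<Rightarrow> bool" where
  "invertible_on I X \<longleftrightarrow> (\<exists>Y. inverse_on I X Y)"

definition minv :: "'a set \<Rightarrow> 'a cmat \<Rightarrow> 'a cmat" where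
  "minv I X = (SOME Y. inverse_on I X Y)"

definition bnd :: "'a set \<Rightarrow> 'a cmat \<Rightarrow> 'a set \<Rightarrow> 'a set" where
  "bnd M A C = {i \<in> C. \<exists>j \<in> M - C. A i j \<noteq> 0}"

definition inn :: "'a set \<Rightarrow> 'a cmat \<Rightarrow> 'a set \<Rightarrow> 'a set" where
  "inn M A C = C - bnd M A C"

text \<open>A binary tree whose nodes carry clusters. Nodes are addressed by their
  position, i.e. the path from the root (False = first child, True = second).\<close>

datatype 'a ctree = Lf "'a set" | Nd "'a set" "'a ctree" "'a ctree"

fun rcl :: "'a ctree \<Rightarrow> 'a set" where
  "rcl (Lf c) = c"
| "rcl (Nd c _ _) = c"

fun wf_ct :: "'a ctree \<Rightarrow> bool" where
  "wf_ct (Lf c) = True"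
| "wf_ct (Nd c l r) \<longleftrightarrow> c = rcl l \<union> rcl r \<and> rcl l \<inter> rcl r = {} \<and> wf_ct l \<and> wf_ct r"

definition cluster_tree :: "'a set \<Rightarrow> 'a ctree \<Rightarrow> bool" where
  "cluster_tree M t \<longleftrightarrow> rcl t = M \<and> wf_ct t"

fun subt :: "'a ctree \<Rightarrow> bool list \<Rightarrow> 'a ctree option" where
  "subt t [] = Some t"
| "subt (Lf c) (b # p) = None"
| "subt (Nd c l r) (b # p) = subt (if b then r else l) p"

definition pos :: "'a ctree \<Rightarrow> bool list set" where
  "pos t = {p. subt t p \<noteq> None}"

definition is_leaf_pos :: "'a ctree \<Rightarrow> bool list \<Rightarrow> bool" where
  "is_leaf_pos t p \<longleftrightarrow> (\<exists>c. subt t p = Some (Lf c))"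

definition clu :: "'a ctree \<Rightarrow> bool list \<Rightarrow> 'a set" where
  "clu t p = rcl (the (subt t p))"

definition sib :: "bool list \<Rightarrow> bool list" where
  "sib a = butlast a @ [\<not> last a]"

text \<open>Nodes of augmented trees: a basic cluster of the cluster tree (given by its
  position), or the complement cluster C_{-a} = M - C_a of a position a.\<close>
datatype anode = Bas "bool list" | Cmp "bool list"

text \<open>The node standing for C_{-a}; C_{-a} with a a child of the root is
  identified with the basic cluster of the sibling of a.\<close>
definition cnode :: "bool list \<Rightarrow> anode" where
  "cnode a = (if length a \<le> 1 then Bas (sib a) else Cmp a)"

text \<open>Nodes of the augmented tree T_r^+ for the leaf at position r
  (the ancestors a_k of r are the nonempty prefixes take k r, their siblings
  b_k are sib (take k r)).\<close>
definition anodes :: "'a ctree \<Rightarrow> bool list \<Rightarrow> anode set" where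
  "anodes t r =
     {Cmp (take k r) | k. 2 \<le> k \<and> k \<le> length r} \<union>
     {Bas q | q k u. 1 \<le> k \<and> k \<le> length r \<and> q = sib (take k r) @ u \<and> q \<in> pos t}"

text \<open>Children in augmented trees (the same in every augmented tree).\<close>
fun ach :: "'a ctree \<Rightarrow> anode \<Rightarrow> anode set" where
  "ach t (Bas q) = (case subt t q of Some (Nd _ _ _) \<Rightarrow> {Bas (q @ [False]), Bas (q @ [True])}
                                   | _ \<Rightarrow> {})"
| "ach t (Cmp a) = {Bas (sib a), cnode (butlast a)}"

fun acl :: "'a set \<Rightarrow> 'a ctree \<Rightarrow> anode \<Rightarrow> 'a set" where
  "acl M t (Bas q) = clu t q"
| "acl M t (Cmp a) = M - clu t a"

definition priv :: "'a set \<Rightarrow> 'a cmat \<Rightarrow> 'a ctree \<Rightarrow> anode \<Rightarrow> 'a set" where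
  "priv M A t g =
     (if ach t g = {} then inn M A (acl M t g)
      else inn M A (acl M t g) - (\<Union>h\<in>ach t g. inn M A (acl M t h)))"

definition consistent_ordering :: "'a ctree \<Rightarrow> bool list \<Rightarrow> anode list \<Rightarrow> bool" where
  "consistent_ordering t r ord \<longleftrightarrow>
     distinct ord \<and> set ord = anodes t r \<and>
     (\<forall>i < length ord. \<forall>j < length ord.
        (ord ! i, ord ! j) \<in> {(g, h). h \<in> ach t g}\<^sup>+ \<longrightarrow> j < i)"

text \<open>One elimination step at node g, acting on the pair (A_{r,g}, Sigma_{r,g}).
  B_g is the boundary set of C_g w.r.t. the original matrix A0.\<close>
definition elim_step ::
  "'a set \<Rightarrow> 'a cmat \<Rightarrow> 'a ctree \<Rightarrow> anode \<Rightarrow> 'a cmat \<times> 'a cmat \<Rightarrow> 'a cmat \<times> 'a cmat" where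
  "elim_step M A0 t g AS =
     (let A = fst AS; Sig = snd AS;
          B = bnd M A0 (acl M t g); S = priv M A0 t g;
          Lc = (\<lambda>i j. \<Sum>k\<in>S. A i k * minv S A k j);
          L = (\<lambda>i j. if i \<in> B \<and> j \<in> S then Lc i j else if i = j then 1 else 0);
          Li = minv M L
      in (mmul M Li A, mmul M (mmul M Li Sig) (ctr Li)))"

text \<open>State (A_{r,g_{n+1}}, Sigma_{r,g_{n+1}}) after eliminating the first n
  nodes g_1..g_n of the ordering.\<close>
definition elim_run ::
  "'a set \<Rightarrow> 'a cmat \<Rightarrow> 'a cmat \<Rightarrow> 'a ctree \<Rightarrow> anode list \<Rightarrow> nat \<Rightarrow> 'a cmat \<times> 'a cmat" where
  "elim_run M A0 Sig0 t ord n = foldl (\<lambda>AS g. elim_step M A0 t g AS) (A0, Sig0) (take n ord)"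

definition elim_ok :: "'a set \<Rightarrow> 'a cmat \<Rightarrow> 'a cmat \<Rightarrow> 'a ctree \<Rightarrow> anode list \<Rightarrow> bool" where
  "elim_ok M A0 Sig0 t ord \<longleftrightarrow>
     (\<forall>n < length ord. invertible_on (priv M A0 t (ord ! n)) (fst (elim_run M A0 Sig0 t ord n)))"

definition sig_plus :: "'a set \<Rightarrow> 'a cmat \<Rightarrow> 'a cmat \<Rightarrow> 'a ctree \<Rightarrow> anode list \<Rightarrow> anode \<Rightarrow> 'a cmat" where
  "sig_plus M A0 Sig0 t ord g = snd (elim_run M A0 Sig0 t ord (Suc (THE n. n < length ord \<and> ord ! n = g)))"

end

theory Submission
  imports Defs
begin


definition eqM :: "'a set \<Rightarrow> 'a cmat \<Rightarrow> 'a cmat \<Rightarrow> bool" where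
  "eqM M X Y \<longleftrightarrow> (\<forall>x\<in>M. \<forall>y\<in>M. X x y = Y x y)"

lemma mmul_assoc:
  assumes "finite M"
  shows "mmul M (mmul M X Y) Z = mmul M X (mmul M Y Z)"
  unfolding mmul_def
  by (auto simp: sum_distrib_left sum_distrib_right mult.assoc intro!: ext sum.swap[where A=M and B=M]
        | subst sum.swap)+

lemma ctr_mmul: "ctr (mmul M X Y) = mmul M (ctr Y) (ctr X)"
  unfolding mmul_def ctr_def by (auto intro!: ext simp: mult.commute)

lemma eqM_mmul: "eqM M X X' \<Longrightarrow> eqM M Y Y' \<Longrightarrow> eqM M (mmul M X Y) (mmul M X' Y')"
  unfolding eqM_def mmul_def by (auto intro!: sum.cong)

lemma eqM_ctr: "eqM M X X' \<Longrightarrow> eqM M (ctr X) (ctr X')"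
  unfolding eqM_def ctr_def by auto

lemma prod_IE:
  assumes "finite M" "x \<in> M" "y \<in> M" "\<forall>m\<in>M. E x m * F m y = 0"
  shows "(\<Sum>m\<in>M. ((if x = m then 1 else 0) + E x m) * ((if m = y then 1 else 0) + F m y))
     = (if x = y then 1 else 0) + E x y + (F x y :: complex)"
proof -
  have "(\<Sum>m\<in>M. ((if x = m then 1 else 0) + E x m) * ((if m = y then 1 else 0) + F m y))
     = (\<Sum>m\<in>M. (if x = m then (if m = y then 1 else 0) else 0) + (if x = m then F m y else 0)
          + (if m = y then E x m else 0) + E x m * F m y)"
    by (intro sum.cong) (auto simp: algebra_simps)
  also have "\<dots> = (if x = y then 1 else 0) + F x y + E x y"
  proof -
    have h: "(\<Sum>m\<in>M. E x m * F m y) = 0" using assms(4) by (intro sum.neutral) auto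
    show ?thesis using assms(1-3) by (simp add: sum.distrib h)
  qed
  finally show ?thesis by simp
qed



definition LcM :: "'a cmat \<Rightarrow> 'a set \<Rightarrow> 'a cmat" where
  "LcM A S = (\<lambda>i j. \<Sum>k\<in>S. A i k * minv S A k j)"
definition Lm :: "'a cmat \<Rightarrow> 'a set \<Rightarrow> 'a set \<Rightarrow> 'a cmat" where
  "Lm A B S = (\<lambda>i j. if i \<in> B \<and> j \<in> S then LcM A S i j else if i = j then 1 else 0)"
definition Em :: "'a cmat \<Rightarrow> 'a set \<Rightarrow> 'a set \<Rightarrow> 'a cmat" where
  "Em A B S = (\<lambda>i j. if i \<in> B \<and> j \<in> S then LcM A S i j else 0)"
definition Pm :: "'a set \<Rightarrow> 'a cmat \<Rightarrow> 'a set \<Rightarrow> 'a set \<Rightarrow> 'a cmat" where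
  "Pm M A B S = minv M (Lm A B S)"
definition stepBS :: "'a set \<Rightarrow> 'a set \<Rightarrow> 'a set \<Rightarrow> 'a cmat \<times> 'a cmat \<Rightarrow> 'a cmat \<times> 'a cmat" where
  "stepBS M B S AS = (let P = Pm M (fst AS) B S in
      (mmul M P (fst AS), mmul M (mmul M P (snd AS)) (ctr P)))"

lemma elim_step_BS:
  "elim_step M A0 t g AS = stepBS M (bnd M A0 (acl M t g)) (priv M A0 t g) AS"
  unfolding elim_step_def stepBS_def Pm_def Lm_def LcM_def Let_def by simp

lemma Lm_eq: "B \<inter> S = {} \<Longrightarrow> Lm A B S = (\<lambda>i j. (if i = j then 1 else 0) + Em A B S i j)"
  unfolding Lm_def Em_def by (auto intro!: ext)

lemma Em_nz: "Em A B S i j \<noteq> 0 \<Longrightarrow> i \<in> B \<and> j \<in> S"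
  unfolding Em_def by (auto split: if_splits)

lemma Pm_eq:
  assumes "finite M" "B \<inter> S = {}" "x \<in> M" "y \<in> M"
  shows "Pm M A B S x y = (if x = y then 1 else 0) - Em A B S x y"
proof -
  let ?E = "Em A B S"
  let ?Y = "\<lambda>i j. (if i = j then 1 else 0) - ?E i j"
  have L: "Lm A B S = (\<lambda>i j. (if i = j then 1 else 0) + ?E i j)" using Lm_eq[OF assms(2)] .
  have EE: "?E a m * ?E m b = 0" for a m b using Em_nz[of A B S a m] Em_nz[of A B S m b] assms(2) by fastforce
  have "inverse_on M (Lm A B S) ?Y"
    unfolding inverse_on_def L
  proof (intro conjI ballI)
    fix i j assume "i \<in> M" "j \<in> M"
    have "(\<Sum>k\<in>M. ((if i = k then 1 else 0) + ?E i k) * ((if k = j then 1 else 0) + (- ?E k j))) =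
       (if i = j then 1 else 0) + ?E i j + (- ?E i j)"
      using \<open>i \<in> M\<close> \<open>j \<in> M\<close> assms(1) EE by (intro prod_IE) auto
    then show "(\<Sum>k\<in>M. ((if i = k then 1 else 0) + ?E i k) * ?Y k j) = (if i = j then 1 else 0)"
      by simp
    have "(\<Sum>k\<in>M. ((if i = k then 1 else 0) + (- ?E i k)) * ((if k = j then 1 else 0) + ?E k j)) =
       (if i = j then 1 else 0) + (- ?E i j) + ?E i j"
      using \<open>i \<in> M\<close> \<open>j \<in> M\<close> assms(1) EE by (intro prod_IE) auto
    then show "(\<Sum>k\<in>M. ?Y i k * ((if k = j then 1 else 0) + ?E k j)) = (if i = j then 1 else 0)"
      by simp
  qed
  then have inv: "inverse_on M (Lm A B S) (Pm M A B S)"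
    unfolding Pm_def minv_def by (rule someI[where P="inverse_on M (Lm A B S)"])
  define P where "P = Pm M A B S"
  have left: "(\<Sum>k\<in>M. P a k * ((if k = b then 1 else 0) + ?E k b)) = (if a = b then 1 else 0)"
    if "a \<in> M" "b \<in> M" for a b
    using inv that unfolding inverse_on_def L P_def by blast
  have key: "P a b = (if a = b then 1 else 0) - (\<Sum>k\<in>M. P a k * ?E k b)" if "a \<in> M" "b \<in> M" for a b
  proof -
    have "(\<Sum>k\<in>M. P a k * ((if k = b then 1 else 0) + ?E k b)) = P a b + (\<Sum>k\<in>M. P a k * ?E k b)"
      using that assms(1) by (simp add: distrib_left sum.distrib mult.commute[of _ "if _ then _ else _"] if_distrib[of "\<lambda>x. x * _"] cong: if_cong)
    then show ?thesis using left[OF that] by (simp add: algebra_simps)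
  qed
  show ?thesis
  proof (cases "y \<in> S")
    case False
    then have "?E k y = 0" for k unfolding Em_def by simp
    then show ?thesis using key[OF assms(3,4)] False unfolding P_def Em_def by simp
  next
    case True
    have "(\<Sum>k\<in>M. P x k * ?E k y) = (\<Sum>k\<in>M. if x = k then ?E k y else 0)"
    proof (rule sum.cong)
      fix k assume k: "k \<in> M"
      show "P x k * ?E k y = (if x = k then ?E k y else 0)"
      proof (cases "k \<in> B")
        case True
        then have "k \<notin> S" using assms(2) by auto
        then have "?E m k = 0" for m unfolding Em_def by simp
        then have "P x k = (if x = k then 1 else 0)" using key[OF assms(3) k] by simp
        then show ?thesis by simp
      next
        case False then show ?thesis unfolding Em_def by simp
      qed
    qed simp
    also have "\<dots> = ?E x y" using assms(1,3) by simp
    finally show ?thesis using key[OF assms(3,4)] unfolding P_def by simp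
  qed
qed



definition eqC :: "'a set \<Rightarrow> 'a cmat \<times> 'a cmat \<Rightarrow> 'a cmat \<times> 'a cmat \<Rightarrow> bool" where
  "eqC C X Y \<longleftrightarrow> eqM C (fst X) (fst Y) \<and> eqM C (snd X) (snd Y)"

lemma eqC_refl: "eqC C X X" unfolding eqC_def eqM_def by auto
lemma eqC_sym: "eqC C X Y \<Longrightarrow> eqC C Y X" unfolding eqC_def eqM_def by auto
lemma eqC_trans: "eqC C X Y \<Longrightarrow> eqC C Y Z \<Longrightarrow> eqC C X Z" unfolding eqC_def eqM_def by auto
lemma eqC_mono: "eqC C X Y \<Longrightarrow> C' \<subseteq> C \<Longrightarrow> eqC C' X Y" unfolding eqC_def eqM_def by blast

lemma Pm_cong:
  assumes "\<forall>x\<in>B \<union> S. \<forall>y\<in>S. A1 x y = A2 x y"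
  shows "Pm M A1 B S = Pm M A2 B S"
proof -
  have "inverse_on S A1 = inverse_on S A2"
    using assms unfolding inverse_on_def by (intro ext) (auto intro!: sum.cong)
  then have "minv S A1 = minv S A2" unfolding minv_def by simp
  then have "LcM A1 S i j = LcM A2 S i j" if "i \<in> B" "j \<in> S" for i j
    using assms that unfolding LcM_def by (auto intro!: sum.cong)
  then have "Lm A1 B S = Lm A2 B S" unfolding Lm_def by (auto intro!: ext)
  then show ?thesis unfolding Pm_def by simp
qed

lemma stepA_fst:
  assumes "finite M" "B \<inter> S = {}" "x \<in> M" "x \<notin> B"
  shows "fst (stepBS M B S (A, Sg)) x y = A x y"
proof -
  have "fst (stepBS M B S (A, Sg)) x y = (\<Sum>m\<in>M. Pm M A B S x m * A m y)"
    unfolding stepBS_def Let_def mmul_def by simp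
  also have "\<dots> = (\<Sum>m\<in>M. if x = m then A m y else 0)"
    using assms by (intro sum.cong) (auto simp: Pm_eq Em_def)
  also have "\<dots> = A x y" using assms by simp
  finally show ?thesis .
qed

lemma stepA_snd:
  assumes "finite M" "B \<inter> S = {}" "x \<in> M" "x \<notin> B" "y \<in> M" "y \<notin> B"
  shows "snd (stepBS M B S (A, Sg)) x y = Sg x y"
proof -
  let ?P = "Pm M A B S"
  have inner: "(\<Sum>m\<in>M. ?P x m * Sg m n) = Sg x n" for n
  proof -
    have "(\<Sum>m\<in>M. ?P x m * Sg m n) = (\<Sum>m\<in>M. if x = m then Sg m n else 0)"
      using assms by (intro sum.cong) (auto simp: Pm_eq Em_def)
    also have "\<dots> = Sg x n" using assms by simp
    finally show ?thesis .
  qed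
  have "snd (stepBS M B S (A, Sg)) x y = (\<Sum>n\<in>M. Sg x n * cnj (?P y n))"
    unfolding stepBS_def Let_def mmul_def ctr_def by (simp add: inner)
  also have "\<dots> = (\<Sum>n\<in>M. if y = n then Sg x n else 0)"
    using assms by (intro sum.cong) (auto simp: Pm_eq Em_def)
  also have "\<dots> = Sg x y" using assms by simp
  finally show ?thesis .
qed

lemma step_local:
  assumes "finite M" "B \<inter> S = {}" "C \<subseteq> M" "B \<inter> C = {}"
  shows "eqC C (stepBS M B S X) X"
proof -
  obtain A Sg where X: "X = (A, Sg)" by (cases X)
  show ?thesis unfolding X eqC_def eqM_def
  proof (intro conjI ballI)
    fix x y assume "x \<in> C" "y \<in> C"
    then have "x \<in> M" "x \<notin> B" "y \<in> M" "y \<notin> B" using assms by auto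
    then show "fst (stepBS M B S (A, Sg)) x y = fst (A, Sg) x y"
      "snd (stepBS M B S (A, Sg)) x y = snd (A, Sg) x y"
      using stepA_fst[OF assms(1,2)] stepA_snd[OF assms(1,2)] by auto
  qed
qed

lemma sum_restr:
  assumes "finite M" "C \<subseteq> M" "\<forall>m\<in>M - C. f m = 0"
  shows "sum f M = sum f C"
  using assms by (intro sum.mono_neutral_right) auto

lemma step_cong:
  assumes "finite M" "B \<inter> S = {}" "C \<subseteq> M" "B \<union> S \<subseteq> C" "eqC C X Y"
  shows "eqC C (stepBS M B S X) (stepBS M B S Y)"
proof -
  obtain A1 S1 where X: "X = (A1, S1)" by (cases X)
  obtain A2 S2 where Y: "Y = (A2, S2)" by (cases Y)
  have eA: "\<forall>x\<in>C. \<forall>y\<in>C. A1 x y = A2 x y" and eS: "\<forall>x\<in>C. \<forall>y\<in>C. S1 x y = S2 x y"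
    using assms(5) unfolding X Y eqC_def eqM_def by auto
  have PP: "Pm M A1 B S = Pm M A2 B S" using eA assms(4) by (intro Pm_cong) blast
  define P where "P = Pm M A1 B S"
  have P0: "P x m = 0" if "x \<in> C" "m \<in> M - C" for x m
  proof -
    have "m \<noteq> x" "m \<notin> S" using that assms by auto
    then show ?thesis using that assms unfolding P_def by (subst Pm_eq) (auto simp: Em_def)
  qed
  have f: "(\<Sum>m\<in>M. P x m * A1 m y) = (\<Sum>m\<in>M. P x m * A2 m y)" if "x \<in> C" "y \<in> C" for x y
  proof -
    have "(\<Sum>m\<in>M. P x m * A1 m y) = (\<Sum>m\<in>C. P x m * A1 m y)"
      using that assms P0 by (intro sum_restr) auto
    also have "\<dots> = (\<Sum>m\<in>C. P x m * A2 m y)" using eA that by (intro sum.cong) auto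
    also have "\<dots> = (\<Sum>m\<in>M. P x m * A2 m y)"
      using that assms P0 by (intro sum_restr[symmetric]) auto
    finally show ?thesis .
  qed
  have inner: "(\<Sum>m\<in>M. P x m * S1 m n) = (\<Sum>m\<in>M. P x m * S2 m n)" if "x \<in> C" "n \<in> C" for x n
  proof -
    have "(\<Sum>m\<in>M. P x m * S1 m n) = (\<Sum>m\<in>C. P x m * S1 m n)"
      using that assms P0 by (intro sum_restr) auto
    also have "\<dots> = (\<Sum>m\<in>C. P x m * S2 m n)" using eS that by (intro sum.cong) auto
    also have "\<dots> = (\<Sum>m\<in>M. P x m * S2 m n)"
      using that assms P0 by (intro sum_restr[symmetric]) auto
    finally show ?thesis .
  qed
  have s: "(\<Sum>n\<in>M. (\<Sum>m\<in>M. P x m * S1 m n) * cnj (P y n)) = (\<Sum>n\<in>M. (\<Sum>m\<in>M. P x m * S2 m n) * cnj (P y n))"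
    if "x \<in> C" "y \<in> C" for x y
  proof -
    have "(\<Sum>n\<in>M. (\<Sum>m\<in>M. P x m * S1 m n) * cnj (P y n)) = (\<Sum>n\<in>C. (\<Sum>m\<in>M. P x m * S1 m n) * cnj (P y n))"
      using that assms P0 by (intro sum_restr) auto
    also have "\<dots> = (\<Sum>n\<in>C. (\<Sum>m\<in>M. P x m * S2 m n) * cnj (P y n))" using inner that by (intro sum.cong) auto
    also have "\<dots> = (\<Sum>n\<in>M. (\<Sum>m\<in>M. P x m * S2 m n) * cnj (P y n))"
      using that assms P0 by (intro sum_restr[symmetric]) auto
    finally show ?thesis .
  qed
  show ?thesis unfolding X Y eqC_def eqM_def stepBS_def Let_def
    using f s unfolding P_def by (simp add: mmul_def ctr_def PP[symmetric])
qed



lemma step_two: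
  assumes "finite M" "Bg \<inter> Sg = {}" "Bg \<union> Sg \<subseteq> M" "(Bg \<union> Sg) \<inter> Bh = {}" "Bh \<inter> Sh = {}"
  shows "stepBS M Bg Sg (stepBS M Bh Sh (A, Sig)) =
    (let Q = mmul M (Pm M A Bg Sg) (Pm M A Bh Sh) in (mmul M Q A, mmul M (mmul M Q Sig) (ctr Q)))"
proof -
  have "Pm M (fst (stepBS M Bh Sh (A, Sig))) Bg Sg = Pm M A Bg Sg"
    using assms by (intro Pm_cong) (auto intro!: stepA_fst)
  then show ?thesis using assms(1)
    unfolding stepBS_def Let_def by (simp add: mmul_assoc ctr_mmul)
qed

lemma PP_comm:
  assumes "finite M" "Bg \<inter> Sg = {}" "Bh \<inter> Sh = {}" "Sg \<inter> Bh = {}" "Sh \<inter> Bg = {}"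
  shows "eqM M (mmul M (Pm M A Bg Sg) (Pm M A Bh Sh)) (mmul M (Pm M A Bh Sh) (Pm M A Bg Sg))"
proof -
  have gen: "mmul M (Pm M A B1 S1) (Pm M A B2 S2) x y =
     (if x = y then 1 else 0) + (- Em A B1 S1 x y) + (- Em A B2 S2 x y)"
    if "B1 \<inter> S1 = {}" "B2 \<inter> S2 = {}" "S1 \<inter> B2 = {}" "x \<in> M" "y \<in> M" for B1 S1 B2 S2 x y
  proof -
    have "mmul M (Pm M A B1 S1) (Pm M A B2 S2) x y =
      (\<Sum>m\<in>M. ((if x = m then 1 else 0) + (- Em A B1 S1 x m)) * ((if m = y then 1 else 0) + (- Em A B2 S2 m y)))"
      unfolding mmul_def using that assms(1) by (intro sum.cong) (auto simp: Pm_eq)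
    also have "\<dots> = (if x = y then 1 else 0) + (- Em A B1 S1 x y) + (- Em A B2 S2 x y)"
    proof (rule prod_IE)
      show "\<forall>m\<in>M. - Em A B1 S1 x m * - Em A B2 S2 m y = 0"
        using that Em_nz[of A B1 S1 x] Em_nz[of A B2 S2 _ y] by fastforce
    qed (use that assms in auto)
    finally show ?thesis .
  qed
  show ?thesis unfolding eqM_def using assms by (auto simp: gen)
qed

lemma step_comm:
  assumes "finite M" "Bg \<inter> Sg = {}" "Bh \<inter> Sh = {}" "Bg \<union> Sg \<subseteq> M" "Bh \<union> Sh \<subseteq> M"
    "(Bg \<union> Sg) \<inter> Bh = {}" "(Bh \<union> Sh) \<inter> Bg = {}"
  shows "eqC M (stepBS M Bg Sg (stepBS M Bh Sh X)) (stepBS M Bh Sh (stepBS M Bg Sg X))"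
proof -
  obtain A Sig where X: "X = (A, Sig)" by (cases X)
  have e: "eqM M (mmul M (Pm M A Bg Sg) (Pm M A Bh Sh)) (mmul M (Pm M A Bh Sh) (Pm M A Bg Sg))"
    using assms by (intro PP_comm) auto
  have r: "eqM M Y Y" for Y unfolding eqM_def by simp
  show ?thesis unfolding X
    using assms e
    by (simp add: step_two Let_def eqC_def eqM_mmul eqM_ctr r)
qed



declare split_paired_All[simp del] split_paired_Ex[simp del]

definition runf :: "('n \<Rightarrow> 's \<Rightarrow> 's) \<Rightarrow> 's \<Rightarrow> 'n list \<Rightarrow> 's" where
  "runf f X L = foldl (\<lambda>AS g. f g AS) X L"

lemma runf_simps[simp]: "runf f X [] = X" "runf f X (g # L) = runf f (f g X) L"
  "runf f X (L1 @ L2) = runf f (runf f X L1) L2"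
  unfolding runf_def by simp_all

lemma run_cong:
  assumes cong: "\<forall>g\<in>D. \<forall>X Y. eqC C X Y \<longrightarrow> eqC C (f g X) (f g Y)"
  shows "set L \<subseteq> D \<Longrightarrow> eqC C X Y \<Longrightarrow> eqC C (runf f X L) (runf f Y L)"
proof (induction L arbitrary: X Y)
  case (Cons g L)
  then have "eqC C (f g X) (f g Y)" using cong by simp
  then show ?case using Cons by simp
qed simp

lemma run_filter:
  assumes cong: "\<forall>g\<in>D. \<forall>X Y. eqC C X Y \<longrightarrow> eqC C (f g X) (f g Y)"
    and loc: "\<forall>g\<in>set L. g \<notin> D \<longrightarrow> (\<forall>X. eqC C (f g X) X)"
  shows "eqC C X Y \<Longrightarrow> eqC C (runf f X L) (runf f Y (filter (\<lambda>g. g \<in> D) L))"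
  using loc
proof (induction L arbitrary: X Y)
  case Nil then show ?case by simp
next
  case (Cons g L)
  show ?case
  proof (cases "g \<in> D")
    case True
    then have "eqC C (f g X) (f g Y)" using cong Cons.prems by blast
    then show ?thesis using Cons True by simp
  next
    case False
    then have "eqC C (f g X) X" using Cons.prems(2) by simp
    then have "eqC C (f g X) Y" using Cons.prems(1) eqC_trans by blast
    then show ?thesis using Cons False by simp
  qed
qed

lemma run_move:
  assumes cong: "\<forall>g\<in>D. \<forall>X Y. eqC C X Y \<longrightarrow> eqC C (f g X) (f g Y)"
  shows "set (z # zs) \<subseteq> D \<Longrightarrow> \<forall>w\<in>set zs. \<forall>X. eqC C (f w (f z X)) (f z (f w X)) \<Longrightarrow>
     eqC C (runf f X (z # zs)) (runf f X (zs @ [z]))"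
proof (induction zs arbitrary: X)
  case Nil then show ?case by (simp add: eqC_refl)
next
  case (Cons w ws)
  have "eqC C (runf f (f w (f z X)) ws) (runf f (f z (f w X)) ws)"
  proof (rule run_cong[OF cong])
    show "set ws \<subseteq> D" using Cons.prems by simp
    show "eqC C (f w (f z X)) (f z (f w X))" using Cons.prems(2) by simp
  qed
  moreover have "eqC C (runf f (f w X) (z # ws)) (runf f (f w X) (ws @ [z]))"
    using Cons by auto
  ultimately show ?case by (auto intro: eqC_trans)
qed

lemma run_perm:
  assumes cong: "\<forall>g\<in>D. \<forall>X Y. eqC C X Y \<longrightarrow> eqC C (f g X) (f g Y)"
    and comm: "\<forall>g\<in>D. \<forall>h\<in>D. g \<noteq> h \<longrightarrow> Q g h \<longrightarrow> Q h g \<longrightarrow> (\<forall>X. eqC C (f g (f h X)) (f h (f g X)))"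
  shows "distinct L1 \<Longrightarrow> distinct L2 \<Longrightarrow> set L1 = set L2 \<Longrightarrow> set L1 \<subseteq> D \<Longrightarrow>
    sorted_wrt Q L1 \<Longrightarrow> sorted_wrt Q L2 \<Longrightarrow> eqC C X Y \<Longrightarrow> eqC C (runf f X L1) (runf f Y L2)"
proof (induction L1 arbitrary: L2 X Y rule: rev_induct)
  case Nil then show ?case by simp
next
  case (snoc z xs)
  have "z \<in> set L2" using snoc.prems by auto
  then obtain ys zs where L2: "L2 = ys @ z # zs" by (meson split_list)
  have zsD: "set (z # zs) \<subseteq> D" using snoc.prems L2 by auto
  have cm: "\<forall>w\<in>set zs. \<forall>X. eqC C (f w (f z X)) (f z (f w X))"
  proof (intro ballI allI)
    fix w X assume w: "w \<in> set zs"
    have "w \<noteq> z" using snoc.prems(2) L2 w by auto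
    have "Q z w" using snoc.prems(6) L2 w by (auto simp: sorted_wrt_append)
    have "w \<in> set xs" using snoc.prems(3) L2 w \<open>w \<noteq> z\<close> by auto
    then have "Q w z" using snoc.prems(5) by (auto simp: sorted_wrt_append)
    show "eqC C (f w (f z X)) (f z (f w X))"
      using comm zsD w \<open>w \<noteq> z\<close> \<open>Q z w\<close> \<open>Q w z\<close> by auto
  qed
  have m: "eqC C (runf f Y L2) (runf f Y (ys @ zs @ [z]))"
    using run_move[OF cong zsD cm, of "runf f Y ys"] L2 by simp
  have ih: "eqC C (runf f X xs) (runf f Y (ys @ zs))"
  proof (rule snoc.IH)
    show "distinct xs" using snoc.prems by simp
    show "distinct (ys @ zs)" using snoc.prems L2 by simp
    show "set xs = set (ys @ zs)" using snoc.prems(1-3) L2 by auto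
    show "set xs \<subseteq> D" using snoc.prems(3,4) by auto
    show "sorted_wrt Q xs" using snoc.prems by (simp add: sorted_wrt_append)
    show "sorted_wrt Q (ys @ zs)" using snoc.prems(6) L2 by (simp add: sorted_wrt_append)
    show "eqC C X Y" by fact
  qed
  have "eqC C (runf f X (xs @ [z])) (runf f Y (ys @ zs @ [z]))"
    using cong zsD ih by simp
  then show ?case using m by (auto intro: eqC_trans eqC_sym)
qed

declare split_paired_All[simp] split_paired_Ex[simp]



lemma subt_append: "subt t (p @ q) = (case subt t p of None \<Rightarrow> None | Some t' \<Rightarrow> subt t' q)"
proof (induction p arbitrary: t)
  case Nil then show ?case by simp
next
  case (Cons b p) then show ?case by (cases t) auto
qed

lemma subt_wf: "wf_ct t \<Longrightarrow> subt t p = Some t' \<Longrightarrow> wf_ct t' \<and> rcl t' \<subseteq> rcl t"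
proof (induction p arbitrary: t)
  case Nil then show ?case by simp
next
  case (Cons b p) then show ?case by (cases t) (auto split: if_splits)
qed

lemma pos_prefix: "p @ q \<in> pos t \<Longrightarrow> p \<in> pos t"
  unfolding pos_def by (auto simp: subt_append split: option.splits)

lemma clu_app: assumes "wf_ct t" "p @ q \<in> pos t" shows "clu t (p @ q) \<subseteq> clu t p"
proof -
  obtain t1 where t1: "subt t p = Some t1" using assms(2) unfolding pos_def by (auto simp: subt_append split: option.splits)
  obtain t2 where t2: "subt t1 q = Some t2" using assms(2) t1 unfolding pos_def by (auto simp: subt_append)
  have "wf_ct t1" using subt_wf[OF assms(1) t1] by simp
  then have "rcl t2 \<subseteq> rcl t1" using subt_wf t2 by blast
  then show ?thesis unfolding clu_def using t1 t2 by (simp add: subt_append)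
qed

lemma child_Nd: "p @ [b] \<in> pos t \<Longrightarrow> \<exists>c l r. subt t p = Some (Nd c l r)"
proof -
  assume a: "p @ [b] \<in> pos t"
  then obtain t1 where t1: "subt t p = Some t1" unfolding pos_def by (auto simp: subt_append split: option.splits)
  show ?thesis
  proof (cases t1)
    case (Lf c) then show ?thesis using a t1 unfolding pos_def by (simp add: subt_append)
  next
    case (Nd c l r) then show ?thesis using t1 by blast
  qed
qed

lemma child_pos: "p @ [b] \<in> pos t \<Longrightarrow> p @ [c] \<in> pos t"
  using child_Nd[of p b t] unfolding pos_def by (auto simp: subt_append)

lemma clu_disj1: assumes "wf_ct t" "p @ [b] \<in> pos t"
  shows "clu t (p @ [b]) \<inter> clu t (p @ [\<not> b]) = {}"
proof -
  obtain c l r where s: "subt t p = Some (Nd c l r)" using child_Nd[OF assms(2)] by blast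
  have "wf_ct (Nd c l r)" using subt_wf[OF assms(1) s] by simp
  then show ?thesis unfolding clu_def using s by (cases b) (auto simp: subt_append)
qed

lemma clu_disj: assumes "wf_ct t" "p @ b # u \<in> pos t" "p @ (\<not> b) # v \<in> pos t"
  shows "clu t (p @ b # u) \<inter> clu t (p @ (\<not> b) # v) = {}"
proof -
  have "clu t ((p @ [b]) @ u) \<subseteq> clu t (p @ [b])" using assms by (intro clu_app) auto
  moreover have "clu t ((p @ [\<not> b]) @ v) \<subseteq> clu t (p @ [\<not> b])" using assms by (intro clu_app) auto
  moreover have "p @ [b] \<in> pos t" using assms(2) pos_prefix[of "p @ [b]" u] by simp
  ultimately show ?thesis using clu_disj1[OF assms(1)] by fastforce
qed

lemma list3: "(\<exists>u. q' = q @ u) \<or> (\<exists>u. q = q' @ u) \<or> (\<exists>p b u v. q = p @ b # u \<and> q' = p @ (\<not> b) # v)"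
proof (induction q arbitrary: q')
  case Nil then show ?case by simp
next
  case (Cons a q)
  show ?case
  proof (cases q')
    case Nil then show ?thesis by simp
  next
    case (Cons a' q'')
    show ?thesis
    proof (cases "a' = a")
      case True
      from Cons.IH[of q''] show ?thesis
      proof (elim disjE exE conjE)
        fix p b u v assume "q = p @ b # u" "q'' = p @ (\<not> b) # v"
        then show ?thesis using True \<open>q' = a' # q''\<close> by (intro disjI2 disjI2 exI[of _ "a # p"]) auto
      qed (use True \<open>q' = a' # q''\<close> in auto)
    next
      case False
      then have "a' = (\<not> a)" by auto
      then show ?thesis using \<open>q' = a' # q''\<close> by (intro disjI2 disjI2 exI[of _ "[]"]) auto
    qed
  qed
qed



definition Rel :: "'a ctree \<Rightarrow> (anode \<times> anode) set" where
  "Rel t = {(g, h). h \<in> ach t g}"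

lemma take_split: "1 \<le> k \<Longrightarrow> k \<le> length r \<Longrightarrow> take k r = take (k - 1) r @ [r ! (k - 1)]"
  by (metis Suc_diff_1 Suc_le_lessD le_less_trans less_Suc_eq_le nat_less_le take_Suc_conv_app_nth zero_less_one)

lemma sib_take: "1 \<le> k \<Longrightarrow> k \<le> length r \<Longrightarrow> sib (take k r) = take (k - 1) r @ [\<not> r ! (k - 1)]"
proof -
  assume a: "1 \<le> k" "k \<le> length r"
  have "sib (take (k - 1) r @ [r ! (k - 1)]) = take (k - 1) r @ [\<not> r ! (k - 1)]" unfolding sib_def by simp
  then show ?thesis using take_split[OF a] by simp
qed

lemma butlast_take': "1 \<le> k \<Longrightarrow> k \<le> length r \<Longrightarrow> butlast (take k r) = take (k - 1) r"
  by (subst take_split) auto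

lemma take_pos: "r \<in> pos t \<Longrightarrow> take k r \<in> pos t"
  using pos_prefix[of "take k r" "drop k r" t] by simp

lemma sib_pos: "r \<in> pos t \<Longrightarrow> 1 \<le> k \<Longrightarrow> k \<le> length r \<Longrightarrow> sib (take k r) \<in> pos t"
proof -
  assume a: "r \<in> pos t" "1 \<le> k" "k \<le> length r"
  have "take (k - 1) r @ [r ! (k - 1)] \<in> pos t" using take_pos[OF a(1), of k] take_split[OF a(2,3)] by simp
  then show ?thesis using child_pos sib_take[OF a(2,3)] by metis
qed

lemma R_Bas: "q @ u \<in> pos t \<Longrightarrow> (Bas q, Bas (q @ u)) \<in> (Rel t)\<^sup>*"
proof (induction u rule: rev_induct)
  case Nil then show ?case by simp
next
  case (snoc b u)
  have "q @ u \<in> pos t" using snoc.prems pos_prefix[of "q @ u" "[b]"] by simp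
  moreover obtain c l r where "subt t (q @ u) = Some (Nd c l r)" using child_Nd[of "q @ u" b t] snoc.prems by auto
  then have "(Bas (q @ u), Bas (q @ u @ [b])) \<in> Rel t" unfolding Rel_def by (cases b) auto
  ultimately show ?case using snoc.IH by (simp add: rtrancl.rtrancl_into_rtrancl)
qed

lemma R_Cmp_step: "2 \<le> k \<Longrightarrow> k < length r \<Longrightarrow> (Cmp (take (Suc k) r), Cmp (take k r)) \<in> Rel t"
  unfolding Rel_def using butlast_take'[of "Suc k" r] by (auto simp: cnode_def)

lemma R_Cmp: assumes "2 \<le> m" "m \<le> k" "k \<le> length r" shows "(Cmp (take k r), Cmp (take m r)) \<in> (Rel t)\<^sup>*"
  using assms(2,3)
proof (induction k rule: dec_induct)
  case base then show ?case by simp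
next
  case (step n)
  then have "(Cmp (take (Suc n) r), Cmp (take n r)) \<in> Rel t" using assms(1) by (intro R_Cmp_step) auto
  then show ?case using step by (meson converse_rtrancl_into_rtrancl Suc_leD)
qed

lemma R_Cmp_Bas: assumes "2 \<le> k" "k \<le> length r" "1 \<le> m" "m \<le> k"
  shows "(Cmp (take k r), Bas (sib (take m r))) \<in> (Rel t)\<^sup>+"
proof (cases "m \<ge> 2")
  case True
  then have "(Cmp (take k r), Cmp (take m r)) \<in> (Rel t)\<^sup>*" using assms by (intro R_Cmp) auto
  moreover have "(Cmp (take m r), Bas (sib (take m r))) \<in> Rel t" unfolding Rel_def by simp
  ultimately show ?thesis by simp
next
  case False
  then have m: "m = 1" using assms by simp
  have "(Cmp (take k r), Cmp (take 2 r)) \<in> (Rel t)\<^sup>*" using assms by (intro R_Cmp) auto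
  moreover have "(Cmp (take 2 r), Bas (sib (take 1 r))) \<in> Rel t"
    using assms butlast_take'[of 2 r] unfolding Rel_def by (auto simp: cnode_def)
  ultimately show ?thesis using m by simp
qed

lemma anodes_cases:
  "g \<in> anodes t r \<longleftrightarrow> (\<exists>k. g = Cmp (take k r) \<and> 2 \<le> k \<and> k \<le> length r) \<or>
     (\<exists>k u. g = Bas (sib (take k r) @ u) \<and> 1 \<le> k \<and> k \<le> length r \<and> sib (take k r) @ u \<in> pos t)"
  unfolding anodes_def by blast



lemma clu_M: "cluster_tree M t \<Longrightarrow> q \<in> pos t \<Longrightarrow> clu t q \<subseteq> M"
  using clu_app[of t "[]" q] unfolding cluster_tree_def clu_def by simp

lemma acl_M: "cluster_tree M t \<Longrightarrow> g \<in> anodes t r \<Longrightarrow> acl M t g \<subseteq> M"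
  unfolding anodes_cases using clu_M by fastforce

lemma sib_disj: assumes "cluster_tree M t" "r \<in> pos t" "1 \<le> k" "k \<le> length r"
  shows "clu t (sib (take k r)) \<inter> clu t (take k r) = {}"
proof -
  have w: "wf_ct t" using assms(1) unfolding cluster_tree_def by simp
  have "take (k - 1) r @ [r ! (k - 1)] \<in> pos t" using take_pos[OF assms(2), of k] take_split[OF assms(3,4)] by simp
  moreover have "take (k - 1) r @ [\<not> r ! (k - 1)] \<in> pos t" using sib_pos[OF assms(2-4)] sib_take[OF assms(3,4)] by simp
  ultimately have "clu t (take (k - 1) r @ [r ! (k - 1)]) \<inter> clu t (take (k - 1) r @ [\<not> r ! (k - 1)]) = {}"
    using clu_disj[OF w, of "take (k - 1) r" "r ! (k - 1)" "[]" "[]"] by simp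
  then show ?thesis using take_split[OF assms(3,4)] sib_take[OF assms(3,4)] by (simp add: Int_commute)
qed

lemma clu_take_mono: assumes "cluster_tree M t" "r \<in> pos t" "m \<le> k"
  shows "clu t (take k r) \<subseteq> clu t (take m r)"
proof -
  have "take k r = take m r @ drop m (take k r)" using assms(3)
    by (metis append_take_drop_id min.absorb1 take_take)
  moreover have "take k r \<in> pos t" using take_pos[OF assms(2)] .
  ultimately show ?thesis using clu_app[of t "take m r" "drop m (take k r)"] assms(1)
    unfolding cluster_tree_def by simp
qed

lemma ach_Bas: "h \<in> ach t (Bas q) \<Longrightarrow> \<exists>b. h = Bas (q @ [b]) \<and> q @ [b] \<in> pos t"
  by (auto simp: pos_def subt_append split: option.splits ctree.splits)

lemma ach_props:
  assumes ct: "cluster_tree M t" and rp: "r \<in> pos t" and g: "g \<in> anodes t r" and h: "h \<in> ach t g"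
  shows "h \<in> anodes t r \<and> acl M t h \<subseteq> acl M t g"
proof -
  have w: "wf_ct t" using ct unfolding cluster_tree_def by simp
  from g[unfolded anodes_cases] show ?thesis
  proof (elim disjE exE conjE)
    fix k u assume gk: "g = Bas (sib (take k r) @ u)" "1 \<le> k" "k \<le> length r" "sib (take k r) @ u \<in> pos t"
    obtain b where hb: "h = Bas (sib (take k r) @ u @ [b])" "sib (take k r) @ u @ [b] \<in> pos t"
      using ach_Bas[of h t "sib (take k r) @ u"] h gk by auto
    have "h \<in> anodes t r" unfolding anodes_cases using hb gk by blast
    moreover have "acl M t h \<subseteq> acl M t g" using gk hb clu_app[OF w, of "sib (take k r) @ u" "[b]"] by simp
    ultimately show ?thesis ..
  next
    fix k assume gk: "g = Cmp (take k r)" "2 \<le> k" "k \<le> length r"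
    have bl: "butlast (take k r) = take (k - 1) r" using gk by (intro butlast_take') auto
    have hc: "h = Bas (sib (take k r)) \<or> h = cnode (take (k - 1) r)" using h gk bl by auto
    then show ?thesis
    proof
      assume hh: "h = Bas (sib (take k r))"
      have "h \<in> anodes t r" unfolding anodes_cases using hh gk sib_pos[OF rp, of k]
        by (intro disjI2 exI[of _ k] exI[of _ "[]"]) auto
      moreover have "acl M t h \<subseteq> acl M t g"
        using hh gk sib_disj[OF ct rp, of k] clu_M[OF ct sib_pos[OF rp, of k]] by auto
      ultimately show ?thesis ..
    next
      assume hh: "h = cnode (take (k - 1) r)"
      show ?thesis
      proof (cases "k = 2")
        case True
        then have hh': "h = Bas (sib (take 1 r))" using hh gk by (simp add: cnode_def)
        have "h \<in> anodes t r" unfolding anodes_cases using hh' gk sib_pos[OF rp, of 1]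
          by (intro disjI2 exI[of _ 1] exI[of _ "[]"]) auto
        moreover have "acl M t h \<subseteq> acl M t g"
          using hh' gk sib_disj[OF ct rp, of 1] clu_M[OF ct sib_pos[OF rp, of 1]]
            clu_take_mono[OF ct rp, of 1 k] by auto
        ultimately show ?thesis ..
      next
        case False
        then have hh': "h = Cmp (take (k - 1) r)" using hh gk by (simp add: cnode_def)
        have "h \<in> anodes t r" unfolding anodes_cases using hh' gk False by auto
        moreover have "acl M t h \<subseteq> acl M t g"
          using hh' gk clu_take_mono[OF ct rp, of "k - 1" k] by auto
        ultimately show ?thesis ..
      qed
    qed
  qed
qed

lemma desc_props:
  assumes ct: "cluster_tree M t" and rp: "r \<in> pos t"
  shows "(g, h) \<in> (Rel t)\<^sup>+ \<Longrightarrow> g \<in> anodes t r \<Longrightarrow> h \<in> anodes t r \<and> acl M t h \<subseteq> acl M t g"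
proof (induction rule: trancl_induct)
  case (base y) then show ?case using ach_props[OF ct rp] unfolding Rel_def by auto
next
  case (step y z) then show ?case using ach_props[OF ct rp, of y z] unfolding Rel_def by auto
qed



lemma CB:
  assumes ct: "cluster_tree M t" and rp: "r \<in> pos t" and k: "2 \<le> k" "k \<le> length r"
    and m: "1 \<le> m" "m \<le> length r" "sib (take m r) @ u \<in> pos t"
  shows "(Cmp (take k r), Bas (sib (take m r) @ u)) \<in> (Rel t)\<^sup>+ \<or>
    acl M t (Cmp (take k r)) \<inter> acl M t (Bas (sib (take m r) @ u)) = {}"
proof (cases "m \<le> k")
  case True
  have "(Cmp (take k r), Bas (sib (take m r))) \<in> (Rel t)\<^sup>+" using k m True by (intro R_Cmp_Bas) auto
  moreover have "(Bas (sib (take m r)), Bas (sib (take m r) @ u)) \<in> (Rel t)\<^sup>*" using m by (intro R_Bas)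
  ultimately have "(Cmp (take k r), Bas (sib (take m r) @ u)) \<in> (Rel t)\<^sup>+" by (rule trancl_rtrancl_trancl)
  then show ?thesis ..
next
  case False
  have "k \<le> m - 1" using False by simp
  then have "take k (take (m - 1) r) = take k r" by (simp add: min_def)
  then have e2: "take (m - 1) r = take k r @ drop k (take (m - 1) r)"
    using append_take_drop_id[of k "take (m - 1) r"] by simp
  have e1: "sib (take m r) @ u = take (m - 1) r @ ([\<not> r ! (m - 1)] @ u)"
    using sib_take[OF m(1,2)] by simp
  have eq: "sib (take m r) @ u = take k r @ (drop k (take (m - 1) r) @ [\<not> r ! (m - 1)] @ u)"
    using e1 e2 by (metis append.assoc)
  have "clu t (sib (take m r) @ u) \<subseteq> clu t (take k r)"
    using clu_app[of t "take k r"] m(3) ct unfolding cluster_tree_def eq by simp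
  then show ?thesis by auto
qed

lemma rel_or_disj:
  assumes ct: "cluster_tree M t" and rp: "r \<in> pos t" and g: "g \<in> anodes t r" and h: "h \<in> anodes t r"
  shows "g = h \<or> (g, h) \<in> (Rel t)\<^sup>+ \<or> (h, g) \<in> (Rel t)\<^sup>+ \<or> acl M t g \<inter> acl M t h = {}"
proof -
  have w: "wf_ct t" using ct unfolding cluster_tree_def by simp
  have BB: "Bas q = Bas q' \<or> (Bas q, Bas q') \<in> (Rel t)\<^sup>+ \<or> (Bas q', Bas q) \<in> (Rel t)\<^sup>+ \<or>
       acl M t (Bas q) \<inter> acl M t (Bas q') = {}" if "q \<in> pos t" "q' \<in> pos t" for q q'
  proof -
    from list3[of q' q] show ?thesis
    proof (elim disjE exE conjE)
      fix u assume u: "q' = q @ u"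
      show ?thesis
      proof (cases "u = []")
        case True then show ?thesis using u by simp
      next
        case False
        have "(Bas q, Bas q') \<in> (Rel t)\<^sup>*" using R_Bas[of q u t] that u by simp
        then show ?thesis using False u by (auto simp: rtrancl_eq_or_trancl)
      qed
    next
      fix u assume u: "q = q' @ u"
      show ?thesis
      proof (cases "u = []")
        case True then show ?thesis using u by simp
      next
        case False
        have "(Bas q', Bas q) \<in> (Rel t)\<^sup>*" using R_Bas[of q' u t] that u by simp
        then show ?thesis using False u by (auto simp: rtrancl_eq_or_trancl)
      qed
    next
      fix p b u v assume "q = p @ b # u" "q' = p @ (\<not> b) # v"
      then show ?thesis using clu_disj[OF w, of p b u v] that by simp
    qed
  qed
  from g[unfolded anodes_cases] h[unfolded anodes_cases] show ?thesis
  proof (elim disjE exE conjE)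
    fix k k' assume a: "g = Cmp (take k r)" "2 \<le> k" "k \<le> length r" "h = Cmp (take k' r)" "2 \<le> k'" "k' \<le> length r"
    consider "k = k'" | "k' < k" | "k < k'" by linarith
    then show ?thesis
    proof cases
      case 1 then show ?thesis using a by simp
    next
      case 2
      have "(g, Cmp (take (k - 1) r)) \<in> Rel t" using R_Cmp_step[of "k - 1" r t] a 2 by (simp add: Suc_diff_1)
      moreover have "(Cmp (take (k - 1) r), h) \<in> (Rel t)\<^sup>*" unfolding a(4) using a 2 by (intro R_Cmp) auto
      ultimately show ?thesis by (meson rtrancl_into_trancl2)
    next
      case 3
      have "(h, Cmp (take (k' - 1) r)) \<in> Rel t" using R_Cmp_step[of "k' - 1" r t] a 3 by (simp add: Suc_diff_1)
      moreover have "(Cmp (take (k' - 1) r), g) \<in> (Rel t)\<^sup>*" unfolding a(1) using a 3 by (intro R_Cmp) auto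
      ultimately show ?thesis by (meson rtrancl_into_trancl2)
    qed
  next
    fix k k' u assume a: "g = Cmp (take k r)" "2 \<le> k" "k \<le> length r"
      "h = Bas (sib (take k' r) @ u)" "1 \<le> k'" "k' \<le> length r" "sib (take k' r) @ u \<in> pos t"
    have "(g, h) \<in> (Rel t)\<^sup>+ \<or> acl M t g \<inter> acl M t h = {}"
      unfolding a(1,4) by (rule CB[OF ct rp a(2,3) a(5,6,7)])
    then show ?thesis by blast
  next
    fix k k' u assume a: "h = Cmp (take k r)" "2 \<le> k" "k \<le> length r"
      "g = Bas (sib (take k' r) @ u)" "1 \<le> k'" "k' \<le> length r" "sib (take k' r) @ u \<in> pos t"
    have "(h, g) \<in> (Rel t)\<^sup>+ \<or> acl M t h \<inter> acl M t g = {}"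
      unfolding a(1,4) by (rule CB[OF ct rp a(2,3) a(5,6,7)])
    then show ?thesis by blast
  next
    fix k u k' u' assume a: "g = Bas (sib (take k r) @ u)" "sib (take k r) @ u \<in> pos t"
      "h = Bas (sib (take k' r) @ u')" "sib (take k' r) @ u' \<in> pos t"
    show ?thesis unfolding a(1,3) by (rule BB[OF a(2) a(4)])
  qed
qed



lemma BS_props:
  "bnd M A C \<subseteq> C" "priv M A t g \<subseteq> acl M t g - bnd M A (acl M t g)"
  unfolding bnd_def priv_def inn_def by auto

lemma sig_plus_eq:
  assumes "distinct ord" "n < length ord" "ord ! n = g"
  shows "sig_plus M A Sig t ord g = snd (elim_step M A t g (runf (elim_step M A t) (A, Sig) (take n ord)))"
proof -
  have "(THE n. n < length ord \<and> ord ! n = g) = n"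
    using assms by (intro the_equality) (auto simp: nth_eq_iff_index_eq)
  then show ?thesis unfolding sig_plus_def elim_run_def runf_def
    using assms by (simp add: take_Suc_conv_app_nth)
qed

lemma ord_facts:
  assumes ct: "cluster_tree M t" and rp: "r \<in> pos t" and co: "consistent_ordering t r ord"
    and i: "i \<in> anodes t r"
  obtains n where "n < length ord" "ord ! n = i"
    "\<forall>g\<in>set (take n ord). (i, g) \<notin> (Rel t)\<^sup>+ \<longrightarrow> acl M t g \<inter> acl M t i = {}"
    "set (filter (\<lambda>g. g \<in> {h. (i, h) \<in> (Rel t)\<^sup>+}) (take n ord)) = {h. (i, h) \<in> (Rel t)\<^sup>+}"
    "distinct (filter (\<lambda>g. g \<in> {h. (i, h) \<in> (Rel t)\<^sup>+}) (take n ord))"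
    "sorted_wrt (\<lambda>z y. (z, y) \<notin> (Rel t)\<^sup>+) (filter (\<lambda>g. g \<in> {h. (i, h) \<in> (Rel t)\<^sup>+}) (take n ord))"
proof -
  have dist: "distinct ord" and so: "set ord = anodes t r"
    and cons: "\<And>a b. a < length ord \<Longrightarrow> b < length ord \<Longrightarrow> (ord ! a, ord ! b) \<in> (Rel t)\<^sup>+ \<Longrightarrow> b < a"
    using co unfolding consistent_ordering_def Rel_def by auto
  obtain n where n: "n < length ord" "ord ! n = i" using i so by (metis in_set_conv_nth)
  have A: "\<forall>g\<in>set (take n ord). (i, g) \<notin> (Rel t)\<^sup>+ \<longrightarrow> acl M t g \<inter> acl M t i = {}"
  proof (intro ballI impI)
    fix g assume g: "g \<in> set (take n ord)" "(i, g) \<notin> (Rel t)\<^sup>+"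
    then obtain j where j: "j < n" "ord ! j = g" by (auto simp: in_set_conv_nth)
    have gi: "g \<noteq> i" using j n dist by (auto simp: nth_eq_iff_index_eq)
    have "(g, i) \<notin> (Rel t)\<^sup>+" using cons[of j n] j n by auto
    moreover have ga: "g \<in> anodes t r" using j n so by (metis nth_mem order.strict_trans)
    have dj: "g = i \<or> (g, i) \<in> (Rel t)\<^sup>+ \<or> (i, g) \<in> (Rel t)\<^sup>+ \<or> acl M t g \<inter> acl M t i = {}"
      by (rule rel_or_disj[OF ct rp ga i])
    show "acl M t g \<inter> acl M t i = {}" using dj gi g(2) calculation by argo
  qed
  have sub: "{h. (i, h) \<in> (Rel t)\<^sup>+} \<subseteq> set (take n ord)"
  proof
    fix h assume "h \<in> {h. (i, h) \<in> (Rel t)\<^sup>+}"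
    then have h: "(i, h) \<in> (Rel t)\<^sup>+" by simp
    then have "h \<in> anodes t r" using desc_props[OF ct rp h i] by simp
    then obtain j where j: "j < length ord" "ord ! j = h" using so by (metis in_set_conv_nth)
    then have "j < n" using cons[of n j] n h by simp
    then show "h \<in> set (take n ord)" using j by (auto simp: in_set_conv_nth intro!: exI[of _ j])
  qed
  have st: "sorted_wrt (\<lambda>z y. (z, y) \<notin> (Rel t)\<^sup>+) ord"
    unfolding sorted_wrt_iff_nth_less
  proof (intro allI impI)
    fix a b assume ab: "a < b" "b < length ord"
    show "(ord ! a, ord ! b) \<notin> (Rel t)\<^sup>+"
    proof
      assume "(ord ! a, ord ! b) \<in> (Rel t)\<^sup>+"
      then have "b < a" using cons[of a b] ab by simp
      then show False using ab by simp
    qed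
  qed
  then have "sorted_wrt (\<lambda>z y. (z, y) \<notin> (Rel t)\<^sup>+) (take n ord @ drop n ord)" by simp
  then have "sorted_wrt (\<lambda>z y. (z, y) \<notin> (Rel t)\<^sup>+) (take n ord)"
    by (simp only: sorted_wrt_append)
  then have s3: "sorted_wrt (\<lambda>z y. (z, y) \<notin> (Rel t)\<^sup>+) (filter (\<lambda>g. g \<in> {h. (i, h) \<in> (Rel t)\<^sup>+}) (take n ord))"
    by (rule sorted_wrt_filter)
  have s1: "set (filter (\<lambda>g. g \<in> {h. (i, h) \<in> (Rel t)\<^sup>+}) (take n ord)) = {h. (i, h) \<in> (Rel t)\<^sup>+}"
    using sub by (simp only: set_filter) blast
  have s2: "distinct (filter (\<lambda>g. g \<in> {h. (i, h) \<in> (Rel t)\<^sup>+}) (take n ord))"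
    using dist by simp
  show ?thesis by (rule that[OF n A s1 s2 s3])
qed



theorem corollary4:
  fixes M :: "'a set" and A Sig :: "'a cmat" and t :: "'a ctree"
    and r s :: "bool list" and ordr ords :: "anode list"
  assumes "finite M"
    and "invertible_on M A"
    and "\<forall>i\<in>M. \<forall>j\<in>M. A i j \<noteq> 0 \<longleftrightarrow> A j i \<noteq> 0"
    and "\<forall>i\<in>M. \<forall>j\<in>M. i \<noteq> j \<and> A i j = 0 \<longrightarrow> Sig i j = 0"
    and "cluster_tree M t"
    and "is_leaf_pos t r" and "is_leaf_pos t s"
    and "consistent_ordering t r ordr" and "consistent_ordering t s ords"
    and "elim_ok M A Sig t ordr" and "elim_ok M A Sig t ords"
    and "i \<in> anodes t r" and "i \<in> anodes t s"
  shows "\<forall>p\<in>bnd M A (acl M t i). \<forall>q\<in>bnd M A (acl M t i).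
           sig_plus M A Sig t ordr i p q = sig_plus M A Sig t ords i p q"
proof -
  note fin = assms(1) and ct = assms(5) and ir = assms(12) and is_ = assms(13)
  have rp: "r \<in> pos t" using assms(6) unfolding is_leaf_pos_def pos_def by auto
  have sp: "s \<in> pos t" using assms(7) unfolding is_leaf_pos_def pos_def by auto
  define f where "f = elim_step M A t"
  define C where "C = acl M t i"
  define D where "D = {h. (i, h) \<in> (Rel t)\<^sup>+}"
  define Q where "Q = (\<lambda>z y. (z, y) \<notin> (Rel t)\<^sup>+)"
  define X0 where "X0 = (A, Sig)"
  have fBS: "f g = stepBS M (bnd M A (acl M t g)) (priv M A t g)" for g
    unfolding f_def by (intro ext) (rule elim_step_BS)
  have BS1: "bnd M A (acl M t g) \<inter> priv M A t g = {}" for g using BS_props(1)[of M A "acl M t g"] BS_props(2)[of M A t g] by blast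
  have BS2: "bnd M A (acl M t g) \<union> priv M A t g \<subseteq> acl M t g" for g
    using BS_props(1)[of M A "acl M t g"] BS_props(2)[of M A t g] by blast
  have CM: "C \<subseteq> M" unfolding C_def by (rule acl_M[OF ct ir])
  have Dp: "g \<in> anodes t r \<and> acl M t g \<subseteq> C" if "g \<in> D" for g
    using desc_props[OF ct rp _ ir] that unfolding D_def C_def by blast
  have cong: "\<forall>g\<in>D. \<forall>X Y. eqC C X Y \<longrightarrow> eqC C (f g X) (f g Y)"
  proof (intro ballI allI impI)
    fix g X Y assume g: "g \<in> D" and e: "eqC C X Y"
    show "eqC C (f g X) (f g Y)" unfolding fBS
      by (rule step_cong[OF fin BS1 CM _ e]) (use BS2[of g] Dp[OF g] in blast)
  qed
  have comm: "\<forall>g\<in>D. \<forall>h\<in>D. g \<noteq> h \<longrightarrow> Q g h \<longrightarrow> Q h g \<longrightarrow> (\<forall>X. eqC C (f g (f h X)) (f h (f g X)))"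
  proof (intro ballI allI impI)
    fix g h X assume g: "g \<in> D" and h: "h \<in> D" and gh: "g \<noteq> h" and q1: "Q g h" and q2: "Q h g"
    have ga: "g \<in> anodes t r" and ha: "h \<in> anodes t r" using Dp g h by auto
    have dj: "g = h \<or> (g, h) \<in> (Rel t)\<^sup>+ \<or> (h, g) \<in> (Rel t)\<^sup>+ \<or> acl M t g \<inter> acl M t h = {}"
      by (rule rel_or_disj[OF ct rp ga ha])
    have d: "acl M t g \<inter> acl M t h = {}" using dj gh q1 q2 unfolding Q_def by argo
    have gM: "acl M t g \<subseteq> M" by (rule acl_M[OF ct ga])
    have hM: "acl M t h \<subseteq> M" by (rule acl_M[OF ct ha])
    have "eqC M (f g (f h X)) (f h (f g X))" unfolding fBS
    proof (rule step_comm[OF fin BS1 BS1])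
      show "bnd M A (acl M t g) \<union> priv M A t g \<subseteq> M" using BS2[of g] gM by blast
      show "bnd M A (acl M t h) \<union> priv M A t h \<subseteq> M" using BS2[of h] hM by blast
      show "(bnd M A (acl M t g) \<union> priv M A t g) \<inter> bnd M A (acl M t h) = {}"
        using BS2[of g] BS2[of h] d by blast
      show "(bnd M A (acl M t h) \<union> priv M A t h) \<inter> bnd M A (acl M t g) = {}"
        using BS2[of g] BS2[of h] d by blast
    qed
    then show "eqC C (f g (f h X)) (f h (f g X))" using CM by (rule eqC_mono)
  qed
  have side: "eqC C (runf f X0 (take n ord)) (runf f X0 (filter (\<lambda>g. g \<in> D) (take n ord)))"
    if "\<forall>g\<in>set (take n ord). (i, g) \<notin> (Rel t)\<^sup>+ \<longrightarrow> acl M t g \<inter> acl M t i = {}" for n ord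
  proof (rule run_filter[OF cong _ eqC_refl])
    show "\<forall>g\<in>set (take n ord). g \<notin> D \<longrightarrow> (\<forall>X. eqC C (f g X) X)"
    proof (intro ballI impI allI)
      fix g X assume g: "g \<in> set (take n ord)" "g \<notin> D"
      then have "acl M t g \<inter> C = {}" using that unfolding D_def C_def by blast
      then have "bnd M A (acl M t g) \<inter> C = {}" using BS2[of g] by blast
      then show "eqC C (f g X) X" unfolding fBS by (rule step_local[OF fin BS1 CM])
    qed
  qed
  obtain nr where nr: "nr < length ordr" "ordr ! nr = i"
    "\<forall>g\<in>set (take nr ordr). (i, g) \<notin> (Rel t)\<^sup>+ \<longrightarrow> acl M t g \<inter> acl M t i = {}"
    "set (filter (\<lambda>g. g \<in> D) (take nr ordr)) = D"
    "distinct (filter (\<lambda>g. g \<in> D) (take nr ordr))"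
    "sorted_wrt Q (filter (\<lambda>g. g \<in> D) (take nr ordr))"
    using ord_facts[OF ct rp assms(8) ir] unfolding D_def Q_def by metis
  obtain ns where ns: "ns < length ords" "ords ! ns = i"
    "\<forall>g\<in>set (take ns ords). (i, g) \<notin> (Rel t)\<^sup>+ \<longrightarrow> acl M t g \<inter> acl M t i = {}"
    "set (filter (\<lambda>g. g \<in> D) (take ns ords)) = D"
    "distinct (filter (\<lambda>g. g \<in> D) (take ns ords))"
    "sorted_wrt Q (filter (\<lambda>g. g \<in> D) (take ns ords))"
    using ord_facts[OF ct sp assms(9) is_] unfolding D_def Q_def by metis
  have e1: "eqC C (runf f X0 (take nr ordr)) (runf f X0 (filter (\<lambda>g. g \<in> D) (take nr ordr)))"
    by (rule side[OF nr(3)])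
  have e2: "eqC C (runf f X0 (take ns ords)) (runf f X0 (filter (\<lambda>g. g \<in> D) (take ns ords)))"
    by (rule side[OF ns(3)])
  have e3: "eqC C (runf f X0 (filter (\<lambda>g. g \<in> D) (take nr ordr))) (runf f X0 (filter (\<lambda>g. g \<in> D) (take ns ords)))"
  proof (rule run_perm[OF cong comm nr(5) ns(5)])
    show "set (filter (\<lambda>g. g \<in> D) (take nr ordr)) = set (filter (\<lambda>g. g \<in> D) (take ns ords))"
      using nr(4) ns(4) by simp
    show "set (filter (\<lambda>g. g \<in> D) (take nr ordr)) \<subseteq> D" using nr(4) by simp
  qed (fact nr(6), fact ns(6), rule eqC_refl)
  have e4: "eqC C (runf f X0 (take nr ordr)) (runf f X0 (take ns ords))"
    using e1 e2 e3 by (meson eqC_trans eqC_sym)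
  have e5: "eqC C (f i (runf f X0 (take nr ordr))) (f i (runf f X0 (take ns ords)))"
    unfolding fBS[of i] by (rule step_cong[OF fin BS1 CM _ e4]) (use BS2[of i] in \<open>simp add: C_def\<close>)
  have dr: "distinct ordr" using assms(8) unfolding consistent_ordering_def by simp
  have ds: "distinct ords" using assms(9) unfolding consistent_ordering_def by simp
  have s1: "sig_plus M A Sig t ordr i = snd (f i (runf f X0 (take nr ordr)))"
    unfolding f_def X0_def by (rule sig_plus_eq[OF dr nr(1,2)])
  have s2: "sig_plus M A Sig t ords i = snd (f i (runf f X0 (take ns ords)))"
    unfolding f_def X0_def by (rule sig_plus_eq[OF ds ns(1,2)])
  have "bnd M A (acl M t i) \<subseteq> C" unfolding C_def using BS_props(1) .
  then show ?thesis using e5 unfolding s1 s2 eqC_def eqM_def by blast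
qed

end
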